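(* (1) If $A,B\in\mathcal A_n$ with $A\le B$ in ASM order, then there is a directed path $A=A_0\to A_1\to\cdots\to A_k=B$ in the ASM graph with $\beta(A_i)-\beta(A_{i-1})=1$ for all $i$. (2) For every $A\in\mathcal A_n$, $\beta(A)=\#\{B\in\mathcal A_n : B\le A \text{ and } B \text{ is a bigrassmannian permutation}\}$.
   Context: An $n\times n$ matrix $A=(a_{ij})$ is an alternating sign matrix (ASM) if all $a_{ij}\in\{-1,0,1\}$, all partial row and column sums lie in $\{0,1\}$, and all full row and column sums equal $1$; $\mathcal A_n$ is the set of these, and permutations are identified with permutation matrices. Corner sum matrix $\widetilde A(i,j)=\sum_{p\le i,q\le j}a_{pq}$ ($=0$ if $i=0$ or $j=0$). ASM order: $A\le B$ iff $\widetilde A(i,j)\ge\widetilde B(i,j)$ for all $i,j$. Bigrassmannian statistic: $\beta(A)=\sum_{i,j=1}^n\min(i,j)-\sum_{i,j=1}^n\widetilde A(i,j)$. A permutation $w$ is bigrassmannian if there is exactly one $i\in[n-1]$ with $w^{-1}(i)>w^{-1}(i+1)$ and exactly one $j\in[n-1]$ with $w(j)>w(j+1)$. For $i<j$, $k<l$, $R_{ij}^{kl}=\{(p,q): i\le p<j,\ k\le q<l\}$, $\widetilde R_{ij}^{kl}$ its $0/1$ indicator matrix; $E(A)$: rectangles with, for all $(p,q)\in R_{ij}^{kl}$, $\widetilde A(p,k)=\widetilde A(p,k-1)$, $\widetilde A(p,l)=\widetilde A(p,l-1)+1$, $\widetilde A(i,q)=\widetilde A(i-1,q)$, $\widetilde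 A(j,q)=\widetilde A(j-1,q)+1$; $E^*(A)$: rectangles with $\widetilde A(p,k)=\widetilde A(p,k-1)+1$, $\widetilde A(p,l)=\widetilde A(p,l-1)$, $\widetilde A(i,q)=\widetilde A(i-1,q)+1$, $\widetilde A(j,q)=\widetilde A(j-1,q)$. $r_{ij}^{kl}(A)$ is the ASM with corner sum matrix $\widetilde A+\widetilde R_{ij}^{kl}$ if $R_{ij}^{kl}\in E(A)$, $\widetilde A-\widetilde R_{ij}^{kl}$ if $R_{ij}^{kl}\in E^*(A)$, $\widetilde A$ otherwise. ASM graph edge $A\to B$: $B=r_{ij}^{kl}(A)$ for some $i<j$, $k<l$, and $\beta(A)<\beta(B)$. *)

theory Defs
  imports Main "HOL-Combinatorics.Permutations"
begin

text \<open>Matrices are functions nat => nat => int, indexed by 1..n, zero elsewhere.\<close>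

definition csum :: "(nat \<Rightarrow> nat \<Rightarrow> int) \<Rightarrow> nat \<Rightarrow> nat \<Rightarrow> int" where
  "csum A i j = (\<Sum>p=1..i. \<Sum>q=1..j. A p q)"

definition is_asm :: "nat \<Rightarrow> (nat \<Rightarrow> nat \<Rightarrow> int) \<Rightarrow> bool" where
  "is_asm n A \<longleftrightarrow>
     (\<forall>i j. \<not> (1 \<le> i \<and> i \<le> n \<and> 1 \<le> j \<and> j \<le> n) \<longrightarrow> A i j = 0) \<and>
     (\<forall>i\<in>{1..n}. \<forall>j\<in>{1..n}. A i j \<in> {-1, 0, 1}) \<and>
     (\<forall>i\<in>{1..n}. \<forall>j\<in>{1..n}. (\<Sum>q=1..j. A i q) \<in> {0, 1}) \<and>
     (\<forall>i\<in>{1..n}. \<forall>j\<in>{1..n}. (\<Sum>p=1..i. A p j) \<in> {0, 1}) \<and>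
     (\<forall>i\<in>{1..n}. (\<Sum>q=1..n. A i q) = 1) \<and>
     (\<forall>j\<in>{1..n}. (\<Sum>p=1..n. A p j) = 1)"

definition asm_le :: "nat \<Rightarrow> (nat \<Rightarrow> nat \<Rightarrow> int) \<Rightarrow> (nat \<Rightarrow> nat \<Rightarrow> int) \<Rightarrow> bool" where
  "asm_le n A B \<longleftrightarrow> (\<forall>i\<in>{0..n}. \<forall>j\<in>{0..n}. csum A i j \<ge> csum B i j)"

definition beta :: "nat \<Rightarrow> (nat \<Rightarrow> nat \<Rightarrow> int) \<Rightarrow> int" where
  "beta n A = (\<Sum>i=1..n. \<Sum>j=1..n. int (min i j)) - (\<Sum>i=1..n. \<Sum>j=1..n. csum A i j)"

definition perm_matrix :: "nat \<Rightarrow> (nat \<Rightarrow> nat) \<Rightarrow> nat \<Rightarrow> nat \<Rightarrow> int" where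
  "perm_matrix n w = (\<lambda>i j. if i \<in> {1..n} \<and> j \<in> {1..n} \<and> w i = j then 1 else 0)"

definition bigrassmannian :: "nat \<Rightarrow> (nat \<Rightarrow> nat) \<Rightarrow> bool" where
  "bigrassmannian n w \<longleftrightarrow>
     card {i\<in>{1..n-1}. inv w i > inv w (i+1)} = 1 \<and>
     card {j\<in>{1..n-1}. w j > w (j+1)} = 1"

definition is_bigrass_perm_matrix :: "nat \<Rightarrow> (nat \<Rightarrow> nat \<Rightarrow> int) \<Rightarrow> bool" where
  "is_bigrass_perm_matrix n B \<longleftrightarrow>
     (\<exists>w. w permutes {1..n} \<and> bigrassmannian n w \<and> B = perm_matrix n w)"

definition rect :: "nat \<Rightarrow> nat \<Rightarrow> nat \<Rightarrow> nat \<Rightarrow> nat \<Rightarrow> nat \<Rightarrow> int" where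
  "rect i j k l p q = (if i \<le> p \<and> p < j \<and> k \<le> q \<and> q < l then 1 else 0)"

definition in_E :: "(nat \<Rightarrow> nat \<Rightarrow> int) \<Rightarrow> nat \<Rightarrow> nat \<Rightarrow> nat \<Rightarrow> nat \<Rightarrow> bool" where
  "in_E A i j k l \<longleftrightarrow>
     (\<forall>p\<in>{i..<j}. csum A p k = csum A p (k-1) \<and> csum A p l = csum A p (l-1) + 1) \<and>
     (\<forall>q\<in>{k..<l}. csum A i q = csum A (i-1) q \<and> csum A j q = csum A (j-1) q + 1)"

definition in_Estar :: "(nat \<Rightarrow> nat \<Rightarrow> int) \<Rightarrow> nat \<Rightarrow> nat \<Rightarrow> nat \<Rightarrow> nat \<Rightarrow> bool" where
  "in_Estar A i j k l \<longleftrightarrow>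
     (\<forall>p\<in>{i..<j}. csum A p k = csum A p (k-1) + 1 \<and> csum A p l = csum A p (l-1)) \<and>
     (\<forall>q\<in>{k..<l}. csum A i q = csum A (i-1) q + 1 \<and> csum A j q = csum A (j-1) q)"

text \<open>The n x n matrix whose corner sum matrix is C (inclusion-exclusion).\<close>
definition from_csum :: "nat \<Rightarrow> (nat \<Rightarrow> nat \<Rightarrow> int) \<Rightarrow> nat \<Rightarrow> nat \<Rightarrow> int" where
  "from_csum n C = (\<lambda>p q. if p \<in> {1..n} \<and> q \<in> {1..n}
      then C p q - C (p-1) q - C p (q-1) + C (p-1) (q-1) else 0)"

definition r_move :: "nat \<Rightarrow> nat \<Rightarrow> nat \<Rightarrow> nat \<Rightarrow> nat \<Rightarrow> (nat \<Rightarrow> nat \<Rightarrow> int) \<Rightarrow> nat \<Rightarrow> nat \<Rightarrow> int" where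
  "r_move n i j k l A =
     (if in_E A i j k l then from_csum n (\<lambda>p q. csum A p q + rect i j k l p q)
      else if in_Estar A i j k l then from_csum n (\<lambda>p q. csum A p q - rect i j k l p q)
      else A)"

definition asm_edge :: "nat \<Rightarrow> (nat \<Rightarrow> nat \<Rightarrow> int) \<Rightarrow> (nat \<Rightarrow> nat \<Rightarrow> int) \<Rightarrow> bool" where
  "asm_edge n A B \<longleftrightarrow> is_asm n A \<and> is_asm n B \<and>
     (\<exists>i j k l. 1 \<le> i \<and> i < j \<and> j \<le> n \<and> 1 \<le> k \<and> k < l \<and> l \<le> n \<and>
        B = r_move n i j k l A) \<and> beta n A < beta n B"

end

theory Submission
  imports Defs
begin

lemma csum_0l[simp]: "csum A 0 j = 0" by (simp add: csum_def)
lemma csum_0r[simp]: "csum A i 0 = 0" by (simp add: csum_def)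
lemma csum_Suc_row: "csum A (Suc i) j = csum A i j + (\<Sum>q=1..j. A (Suc i) q)"
  by (simp add: csum_def sum.cl_ivl_Suc)
lemma csum_Suc_col: "csum A i (Suc j) = csum A i j + (\<Sum>p=1..i. A p (Suc j))"
  by (simp add: csum_def sum.cl_ivl_Suc sum.distrib)

definition valid :: "nat \<Rightarrow> (nat \<Rightarrow> nat \<Rightarrow> int) \<Rightarrow> bool" where
  "valid n C \<longleftrightarrow> (\<forall>j\<le>n. C 0 j = 0 \<and> C j 0 = 0 \<and> C n j = int j \<and> C j n = int j) \<and>
     (\<forall>i<n. \<forall>j\<le>n. C (Suc i) j - C i j \<in> {0,1}) \<and>
     (\<forall>i\<le>n. \<forall>j<n. C i (Suc j) - C i j \<in> {0,1})"

lemma asm_zero: "is_asm n A \<Longrightarrow> \<not> (1 \<le> i \<and> i \<le> n \<and> 1 \<le> j \<and> j \<le> n) \<Longrightarrow> A i j = 0"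
  by (simp add: is_asm_def)

lemma sum_out_row: assumes "is_asm n A" "j \<ge> n"
  shows "(\<Sum>q=1..j. A i q) = (\<Sum>q=1..n. A i q)"
proof -
  have "{1..j} = {1..n} \<union> {n+1..j}" using assms(2) by auto
  moreover have "(\<Sum>q=n+1..j. A i q) = 0" using asm_zero[OF assms(1)] by simp
  ultimately show ?thesis by (simp add: sum.union_disjoint)
qed

lemma sum_out_col: assumes "is_asm n A" "j \<ge> n"
  shows "(\<Sum>q=1..j. A q i) = (\<Sum>q=1..n. A q i)"
proof -
  have "{1..j} = {1..n} \<union> {n+1..j}" using assms(2) by auto
  moreover have "(\<Sum>q=n+1..j. A q i) = 0" using asm_zero[OF assms(1)] by simp
  ultimately show ?thesis by (simp add: sum.union_disjoint)
qed

lemma csum_n_row: assumes "is_asm n A" "j \<le> n" shows "csum A n j = int j"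
proof -
  have "csum A n j = (\<Sum>q=1..j. \<Sum>p=1..n. A p q)" unfolding csum_def by (rule sum.swap)
  also have "\<dots> = (\<Sum>q=1..j. 1)" using assms by (intro sum.cong) (auto simp: is_asm_def)
  finally show ?thesis by simp
qed

lemma csum_n_col: assumes "is_asm n A" "j \<le> n" shows "csum A j n = int j"
proof -
  have "csum A j n = (\<Sum>p=1..j. 1)" unfolding csum_def
    using assms by (intro sum.cong) (auto simp: is_asm_def)
  then show ?thesis by simp
qed

lemma asm_valid: assumes "is_asm n A" shows "valid n (csum A)"
  unfolding valid_def
proof (intro conjI allI impI)
  fix j assume "j \<le> n"
  then show "csum A 0 j = 0" "csum A j 0 = 0" "csum A n j = int j" "csum A j n = int j"
    using csum_n_row csum_n_col assms by auto
next
  fix i j assume "i < n" "j \<le> n"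
  show "csum A (Suc i) j - csum A i j \<in> {0,1}"
  proof (cases "j = 0")
    case False
    then show ?thesis using assms \<open>i<n\<close> \<open>j\<le>n\<close> by (auto simp: csum_Suc_row is_asm_def)
  qed simp
next
  fix i j assume "i \<le> n" "j < n"
  show "csum A i (Suc j) - csum A i j \<in> {0,1}"
  proof (cases "i = 0")
    case False
    then show ?thesis using assms \<open>j<n\<close> \<open>i\<le>n\<close> by (auto simp: csum_Suc_col is_asm_def)
  qed simp
qed

lemma tele: fixes f :: "nat \<Rightarrow> int" shows "(\<Sum>q=1..y. f q - f (q - 1)) = f y - f 0"
  by (induction y) (auto simp: sum.cl_ivl_Suc)

lemma from_csum_row: assumes "1 \<le> i" "i \<le> n" "j \<le> n"
  shows "(\<Sum>q=1..j. from_csum n C i q) = (C i j - C (i-1) j) - (C i 0 - C (i-1) 0)"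
proof -
  have "(\<Sum>q=1..j. from_csum n C i q) = (\<Sum>q=1..j. (\<lambda>q. C i q - C (i-1) q) q - (\<lambda>q. C i q - C (i-1) q) (q-1))"
    using assms by (intro sum.cong) (auto simp: from_csum_def)
  then show ?thesis using tele[of "\<lambda>q. C i q - C (i-1) q" j] by simp
qed

lemma from_csum_col: assumes "1 \<le> j" "i \<le> n" "j \<le> n"
  shows "(\<Sum>p=1..i. from_csum n C p j) = (C i j - C i (j-1)) - (C 0 j - C 0 (j-1))"
proof -
  have "(\<Sum>p=1..i. from_csum n C p j) = (\<Sum>p=1..i. (\<lambda>p. C p j - C p (j-1)) p - (\<lambda>p. C p j - C p (j-1)) (p-1))"
    using assms by (intro sum.cong) (auto simp: from_csum_def)
  then show ?thesis using tele[of "\<lambda>p. C p j - C p (j-1)" i] by simp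
qed

lemma valid_csum_from: assumes "valid n C" "x \<le> n" "y \<le> n"
  shows "csum (from_csum n C) x y = C x y"
  using assms(2)
proof (induction x)
  case 0 then show ?case using assms by (simp add: valid_def)
next
  case (Suc x)
  have "csum (from_csum n C) (Suc x) y = C x y + (\<Sum>q=1..y. from_csum n C (Suc x) q)"
    using Suc by (simp add: csum_Suc_row)
  also have "\<dots> = C (Suc x) y" using from_csum_row[of "Suc x" n y C] Suc assms by (simp add: valid_def)
  finally show ?case .
qed

lemma valid_asm: assumes "valid n C" shows "is_asm n (from_csum n C)"
proof -
  have V: "\<forall>j\<le>n. C 0 j = 0 \<and> C j 0 = 0 \<and> C n j = int j \<and> C j n = int j"
    "\<forall>i<n. \<forall>j\<le>n. C (Suc i) j - C i j \<in> {0,1}"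
    "\<forall>i\<le>n. \<forall>j<n. C i (Suc j) - C i j \<in> {0,1}" using assms by (auto simp: valid_def)
  have R: "C i j - C (i-1) j \<in> {0,1}" if "1 \<le> i" "i \<le> n" "j \<le> n" for i j
    using V(2)[rule_format, of "i-1" j] that by simp
  have Cc: "C i j - C i (j-1) \<in> {0,1}" if "1 \<le> j" "i \<le> n" "j \<le> n" for i j
    using V(3)[rule_format, of i "j-1"] that by simp
  show ?thesis unfolding is_asm_def
  proof (intro conjI ballI allI impI)
    fix i j assume "\<not> (1 \<le> i \<and> i \<le> n \<and> 1 \<le> j \<and> j \<le> n)"
    then show "from_csum n C i j = 0" by (auto simp: from_csum_def)
  next
    fix i j assume ij: "i \<in> {1..n}" "j \<in> {1..n}"
    have "C i j - C i (j-1) \<in> {0,1}" "C (i-1) j - C (i-1) (j-1) \<in> {0,1}" using Cc[where i=i and j=j] Cc[where i="i-1" and j=j] ij by auto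
    then show "from_csum n C i j \<in> {- 1, 0, 1}" using ij by (auto simp: from_csum_def)
    show "(\<Sum>q = 1..j. from_csum n C i q) \<in> {0, 1}"
      using from_csum_row[of i n j C] R[where i=i and j=j] V(1) ij by auto
    show "(\<Sum>p = 1..i. from_csum n C p j) \<in> {0, 1}"
      using from_csum_col[of j i n C] Cc[where i=i and j=j] V(1) ij by auto
  next
    fix i assume i: "i \<in> {1..n}"
    show "(\<Sum>q = 1..n. from_csum n C i q) = 1"
      using from_csum_row[of i n n C] V(1) i by auto
    show "(\<Sum>p = 1..n. from_csum n C p i) = 1"
      using from_csum_col[of i n n C] V(1) i by auto
  qed
qed

lemma asm_from_csum: assumes "is_asm n A" shows "from_csum n (csum A) = A"
proof (intro ext)
  fix p q
  show "from_csum n (csum A) p q = A p q"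
  proof (cases "p \<in> {1..n} \<and> q \<in> {1..n}")
    case True
    define p' where "p' = p - 1"
    define q' where "q' = q - 1"
    have pq: "p = Suc p'" "q = Suc q'" using True by (auto simp: p'_def q'_def)
    have e1: "csum A (Suc p') (Suc q') = csum A p' (Suc q') + (\<Sum>x=1..q'. A (Suc p') x) + A (Suc p') (Suc q')"
      by (simp add: csum_Suc_row sum.cl_ivl_Suc)
    have e2: "csum A (Suc p') q' = csum A p' q' + (\<Sum>x=1..q'. A (Suc p') x)"
      by (simp add: csum_Suc_row)
    show ?thesis using True unfolding from_csum_def pq using e1 e2 by simp
  next
    case False then show ?thesis using asm_zero[OF assms, of p q] by (auto simp: from_csum_def)
  qed
qed

lemma from_csum_cong: assumes "\<forall>x\<le>n. \<forall>y\<le>n. C x y = D x y" shows "from_csum n C = from_csum n D"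
proof (intro ext)
  fix p q show "from_csum n C p q = from_csum n D p q"
  proof (cases "p \<in> {1..n} \<and> q \<in> {1..n}")
    case True
    then have "C p q = D p q" "C (p-1) q = D (p-1) q" "C p (q-1) = D p (q-1)" "C (p-1) (q-1) = D (p-1) (q-1)"
      using assms by auto
    then show ?thesis unfolding from_csum_def by simp
  qed (auto simp: from_csum_def)
qed

lemma asm_eq: assumes "is_asm n A" "is_asm n B" "\<forall>x\<le>n. \<forall>y\<le>n. csum A x y = csum B x y"
  shows "A = B"
proof -
  have "A = from_csum n (csum A)" using asm_from_csum[OF assms(1)] by simp
  also have "\<dots> = from_csum n (csum B)" by (rule from_csum_cong[OF assms(3)])
  also have "\<dots> = B" by (rule asm_from_csum[OF assms(2)])
  finally show ?thesis .
qed


lemma valid_rstep: "valid n C \<Longrightarrow> i < n \<Longrightarrow> j \<le> n \<Longrightarrow> C (Suc i) j - C i j \<in> {0,1}"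
  by (simp add: valid_def)
lemma valid_cstep: "valid n C \<Longrightarrow> i \<le> n \<Longrightarrow> j < n \<Longrightarrow> C i (Suc j) - C i j \<in> {0,1}"
  by (simp add: valid_def)

lemma valid_rows: assumes "valid n C" "x \<le> x'" "x' \<le> n" "y \<le> n"
  shows "C x y \<le> C x' y \<and> C x' y \<le> C x y + int (x' - x)"
  using assms(2,3)
proof (induction x' rule: dec_induct)
  case base then show ?case by simp
next
  case (step m)
  then have "C (Suc m) y - C m y \<in> {0,1}" using valid_rstep[OF assms(1), of m y] assms(4) by simp
  then show ?case using step by (auto simp: Suc_diff_le)
qed

lemma valid_cols: assumes "valid n C" "y \<le> y'" "y' \<le> n" "x \<le> n"
  shows "C x y \<le> C x y' \<and> C x y' \<le> C x y + int (y' - y)"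
  using assms(2,3)
proof (induction y' rule: dec_induct)
  case base then show ?case by simp
next
  case (step m)
  then have "C x (Suc m) - C x m \<in> {0,1}" using valid_cstep[OF assms(1), of x m] assms(4) by simp
  then show ?case using step by (auto simp: Suc_diff_le)
qed

lemma valid_bounds: assumes "valid n C" "x \<le> n" "y \<le> n"
  shows "0 \<le> C x y" "C x y \<le> int x" "C x y \<le> int y" "int x + int y - int n \<le> C x y"
proof -
  have b: "C 0 y = 0" "C x 0 = 0" "C n y = int y" using assms by (auto simp: valid_def)
  show "0 \<le> C x y" "C x y \<le> int x" using valid_rows[OF assms(1), of 0 x y] assms b by auto
  show "C x y \<le> int y" using valid_cols[OF assms(1), of 0 y x] assms b by auto
  show "int x + int y - int n \<le> C x y" using valid_rows[OF assms(1), of x n y] assms b by auto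
qed

lemma valid_lip: assumes "valid n C" "x \<le> n" "y \<le> n" "p \<le> n" "q \<le> n"
  shows "C x y \<le> C p q + int (x - p) + int (y - q)"
proof -
  have "C x y \<le> C (max x p) y" using valid_rows[OF assms(1), of x "max x p" y] assms by auto
  also have "\<dots> \<le> C (max x p) (max y q)" using valid_cols[OF assms(1), of y "max y q" "max x p"] assms by auto
  also have "\<dots> \<le> C p (max y q) + int (max x p - p)" using valid_rows[OF assms(1), of p "max x p" "max y q"] assms by auto
  also have "\<dots> \<le> C p q + int (max y q - q) + int (max x p - p)" using valid_cols[OF assms(1), of q "max y q" p] assms by auto
  finally show ?thesis by (cases "x \<le> p"; cases "y \<le> q") (auto simp: of_nat_diff max_def)
qed

lemma find_move:
  assumes VA: "valid n CA" and VB: "valid n CB" and le: "\<forall>x\<le>n. \<forall>y\<le>n. CB x y \<le> CA x y"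
    and x0: "x0 \<le> n" "y0 \<le> n" "CB x0 y0 < CA x0 y0"
  shows "\<exists>i k. 1 \<le> i \<and> i < n \<and> 1 \<le> k \<and> k < n \<and> CB i k < CA i k \<and>
     CA i k = CA i (k-1) + 1 \<and> CA i (Suc k) = CA i k \<and> CA i k = CA (i-1) k + 1 \<and> CA (Suc i) k = CA i k"
proof -
  define S where "S = {(x,y). x \<le> n \<and> y \<le> n \<and> CB x y < CA x y}"
  define psi where "psi = (\<lambda>(x,y). 2 * CA x y - int x - int y)"
  have fin: "finite S" unfolding S_def by (rule finite_subset[of _ "{0..n} \<times> {0..n}"]) auto
  have ne: "(x0,y0) \<in> S" using x0 by (simp add: S_def)
  define M where "M = Max (psi ` S)"
  have "M \<in> psi ` S" unfolding M_def using fin ne by (intro Max_in) auto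
  then obtain i k where ik: "(i,k) \<in> S" "psi (i,k) = M" by auto
  have mx: "\<And>z. z \<in> S \<Longrightarrow> psi z \<le> psi (i,k)" unfolding ik(2) M_def using fin by auto
  have ikS: "i \<le> n" "k \<le> n" "CB i k < CA i k" using ik(1) by (auto simp: S_def)
  have bA: "\<forall>j\<le>n. CA 0 j = 0 \<and> CA j 0 = 0 \<and> CA n j = int j \<and> CA j n = int j" using VA by (simp add: valid_def)
  have bB: "\<forall>j\<le>n. CB 0 j = 0 \<and> CB j 0 = 0 \<and> CB n j = int j \<and> CB j n = int j" using VB by (simp add: valid_def)
  have i1: "1 \<le> i" using bA bB ikS by (cases i) auto
  have i2: "i < n" using bA bB ikS by (cases "i = n") auto
  have k1: "1 \<le> k" using bA bB ikS by (cases k) auto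
  have k2: "k < n" using bA bB ikS by (cases "k = n") auto
  have a: "CA i k = CA i (k-1) + 1"
  proof (rule ccontr)
    assume na: "\<not> ?thesis"
    have "CA i k - CA i (k-1) \<in> {0,1}" using valid_cstep[OF VA, of i "k-1"] ikS k1 by simp
    then have e: "CA i (k-1) = CA i k" using na by auto
    have "k - 1 < n" using ikS k1 by simp
    then have "CB i (k-1) - CB i k \<le> 0" using valid_cstep[OF VB, of i "k-1"] ikS k1 by auto
    then have "(i,k-1) \<in> S" using e ikS by (auto simp: S_def)
    from mx[OF this] show False using e k1 by (simp add: psi_def)
  qed
  have b: "CA i (Suc k) = CA i k"
  proof (rule ccontr)
    assume na: "\<not> ?thesis"
    have "CA i (Suc k) - CA i k \<in> {0,1}" using valid_cstep[OF VA, of i k] ikS k2 by simp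
    then have e: "CA i (Suc k) = CA i k + 1" using na by auto
    have "CB i (Suc k) - CB i k \<in> {0,1}" using valid_cstep[OF VB, of i k] ikS k2 by simp
    then have "(i,Suc k) \<in> S" using e ikS k2 by (auto simp: S_def)
    from mx[OF this] show False using e by (simp add: psi_def)
  qed
  have c: "CA i k = CA (i-1) k + 1"
  proof (rule ccontr)
    assume na: "\<not> ?thesis"
    have "CA i k - CA (i-1) k \<in> {0,1}" using valid_rstep[OF VA, of "i-1" k] ikS i1 by simp
    then have e: "CA (i-1) k = CA i k" using na by auto
    have "CB i k - CB (i-1) k \<in> {0,1}" using valid_rstep[OF VB, of "i-1" k] ikS i1 by simp
    then have "(i-1,k) \<in> S" using e ikS by (auto simp: S_def)
    from mx[OF this] show False using e i1 by (simp add: psi_def)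
  qed
  have d: "CA (Suc i) k = CA i k"
  proof (rule ccontr)
    assume na: "\<not> ?thesis"
    have "CA (Suc i) k - CA i k \<in> {0,1}" using valid_rstep[OF VA, of i k] ikS i2 by simp
    then have e: "CA (Suc i) k = CA i k + 1" using na by auto
    have "CB (Suc i) k - CB i k \<in> {0,1}" using valid_rstep[OF VB, of i k] ikS i2 by simp
    then have "(Suc i, k) \<in> S" using e ikS i2 by (auto simp: S_def)
    from mx[OF this] show False using e by (simp add: psi_def)
  qed
  show ?thesis using i1 i2 k1 k2 ikS a b c d by blast
qed


lemma rect11: "rect i (Suc i) k (Suc k) p q = (if p = i \<and> q = k then 1 else 0)"
  by (auto simp: rect_def)

lemma beta_diff: "beta n B - beta n A = (\<Sum>i=1..n. \<Sum>j=1..n. csum A i j - csum B i j)"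
  by (simp add: beta_def sum_subtractf)

lemma sum_rect: assumes "1 \<le> i" "i \<le> n" "1 \<le> k" "k \<le> n"
  shows "(\<Sum>p=1..n. \<Sum>q=1..n. rect i (Suc i) k (Suc k) p q) = 1"
proof -
  have "(\<Sum>p=1..n. \<Sum>q=1..n. rect i (Suc i) k (Suc k) p q) = (\<Sum>p=1..n. if p = i then 1 else 0)"
    using assms by (intro sum.cong) (auto simp: rect11 sum.delta)
  also have "\<dots> = 1" using assms by (simp add: sum.delta)
  finally show ?thesis .
qed

lemma one_step:
  assumes A: "is_asm n A" and B: "is_asm n B" and le: "asm_le n A B" and ne: "beta n A \<noteq> beta n B"
  shows "\<exists>A'. asm_edge n A A' \<and> beta n A' = beta n A + 1 \<and> asm_le n A' B"
proof -
  let ?CA = "csum A" and ?CB = "csum B"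
  have VA: "valid n ?CA" and VB: "valid n ?CB" using asm_valid A B by auto
  have lee: "\<forall>x\<le>n. \<forall>y\<le>n. ?CB x y \<le> ?CA x y" using le by (auto simp: asm_le_def)
  have "\<exists>x0 y0. x0 \<le> n \<and> y0 \<le> n \<and> ?CB x0 y0 < ?CA x0 y0"
  proof (rule ccontr)
    assume "\<not> ?thesis"
    then have "\<forall>x\<le>n. \<forall>y\<le>n. ?CA x y = ?CB x y" using lee by force
    then have "beta n B - beta n A = 0" unfolding beta_diff by (intro sum.neutral ballI) auto
    then show False using ne by simp
  qed
  then obtain x0 y0 where x0: "x0 \<le> n" "y0 \<le> n" "?CB x0 y0 < ?CA x0 y0" by blast
  obtain i k where ik: "1 \<le> i" "i < n" "1 \<le> k" "k < n" "?CB i k < ?CA i k"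
    "?CA i k = ?CA i (k-1) + 1" "?CA i (Suc k) = ?CA i k" "?CA i k = ?CA (i-1) k + 1" "?CA (Suc i) k = ?CA i k"
    using find_move[OF VA VB lee x0] by blast
  define C' where "C' = (\<lambda>p q. csum A p q - rect i (Suc i) k (Suc k) p q)"
  have C'e: "C' p q = (if p = i \<and> q = k then ?CA p q - 1 else ?CA p q)" for p q
    by (simp add: C'_def rect11)
  have kk: "Suc (k - 1) = k" "Suc (i - 1) = i" using ik by auto
  have bA: "\<forall>j\<le>n. ?CA 0 j = 0 \<and> ?CA j 0 = 0 \<and> ?CA n j = int j \<and> ?CA j n = int j"
    using VA by (simp add: valid_def)
  have V': "valid n C'"
    unfolding valid_def
  proof (intro conjI allI impI)
    fix j assume j: "j \<le> n"
    have "i \<noteq> 0" "k \<noteq> 0" "i \<noteq> n" "k \<noteq> n" using ik by auto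
    then show "C' 0 j = 0" "C' j 0 = 0" "C' n j = int j" "C' j n = int j"
      using bA j by (simp_all add: C'e)
  next
    fix x y assume xy: "x < n" "y \<le> n"
    have s: "?CA (Suc x) y - ?CA x y \<in> {0,1}" using valid_rstep[OF VA xy] .
    show "C' (Suc x) y - C' x y \<in> {0,1}"
    proof (cases "Suc x = i \<and> y = k")
      case h: True
      have x: "x = i - 1" "x \<noteq> i" using h by auto
      have "C' (Suc x) y = ?CA i k - 1" using h by (simp add: C'e)
      moreover have "C' x y = ?CA (i-1) k" using x h by (simp add: C'e)
      ultimately show ?thesis using ik(8) by simp
    next
      case h1: False
      show ?thesis
      proof (cases "x = i \<and> y = k")
        case h: True
        have "C' (Suc x) y = ?CA (Suc i) k" using h by (simp add: C'e)
        moreover have "C' x y = ?CA i k - 1" using h by (simp add: C'e)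
        ultimately show ?thesis using ik(9) by simp
      next
        case False
        then have "C' (Suc x) y = ?CA (Suc x) y" "C' x y = ?CA x y" using h1 by (simp_all add: C'e)
        then show ?thesis using s by simp
      qed
    qed
  next
    fix x y assume xy: "x \<le> n" "y < n"
    have s: "?CA x (Suc y) - ?CA x y \<in> {0,1}" using valid_cstep[OF VA xy] .
    show "C' x (Suc y) - C' x y \<in> {0,1}"
    proof (cases "x = i \<and> Suc y = k")
      case h: True
      have y: "y = k - 1" "y \<noteq> k" using h by auto
      have "C' x (Suc y) = ?CA i k - 1" using h by (simp add: C'e)
      moreover have "C' x y = ?CA i (k-1)" using y h by (simp add: C'e)
      ultimately show ?thesis using ik(6) by simp
    next
      case h1: False
      show ?thesis
      proof (cases "x = i \<and> y = k")
        case h: True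
        have "C' x (Suc y) = ?CA i (Suc k)" using h by (simp add: C'e)
        moreover have "C' x y = ?CA i k - 1" using h by (simp add: C'e)
        ultimately show ?thesis using ik(7) by simp
      next
        case False
        then have "C' x (Suc y) = ?CA x (Suc y)" "C' x y = ?CA x y" using h1 by (simp_all add: C'e)
        then show ?thesis using s by simp
      qed
    qed
  qed
  define A' where "A' = from_csum n C'"
  have A'asm: "is_asm n A'" unfolding A'_def using valid_asm[OF V'] .
  have cA': "\<And>x y. x \<le> n \<Longrightarrow> y \<le> n \<Longrightarrow> csum A' x y = C' x y"
    unfolding A'_def using valid_csum_from[OF V'] by blast
  have Est: "in_Estar A i (Suc i) k (Suc k)" unfolding in_Estar_def using ik by auto
  have nE: "\<not> in_E A i (Suc i) k (Suc k)" unfolding in_E_def using ik by auto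
  have rm: "r_move n i (Suc i) k (Suc k) A = A'"
    unfolding r_move_def A'_def C'_def using Est nE by simp
  have "beta n A' = (\<Sum>i=1..n. \<Sum>j=1..n. int (min i j)) - (\<Sum>p=1..n. \<Sum>q=1..n. C' p q)"
    unfolding beta_def using cA' by (intro arg_cong2[where f=minus] refl sum.cong) auto
  also have "(\<Sum>p=1..n. \<Sum>q=1..n. C' p q) = (\<Sum>p=1..n. \<Sum>q=1..n. ?CA p q) - (\<Sum>p=1..n. \<Sum>q=1..n. rect i (Suc i) k (Suc k) p q)"
    unfolding C'_def by (simp add: sum_subtractf)
  also have "(\<Sum>p=1..n. \<Sum>q=1..n. rect i (Suc i) k (Suc k) p q) = 1" using ik by (intro sum_rect) auto
  finally have bA': "beta n A' = beta n A + 1" by (simp add: beta_def)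
  have le': "asm_le n A' B" unfolding asm_le_def
  proof (intro ballI)
    fix x y assume "x \<in> {0..n}" "y \<in> {0..n}"
    then show "csum B x y \<le> csum A' x y" using cA' lee ik unfolding C'e by auto
  qed
  have ex: "\<exists>i' j k' l. 1 \<le> i' \<and> i' < j \<and> j \<le> n \<and> 1 \<le> k' \<and> k' < l \<and> l \<le> n \<and>
        A' = r_move n i' j k' l A"
    using ik rm by (intro exI[of _ i] exI[of _ "Suc i"] exI[of _ k] exI[of _ "Suc k"]) simp
  have edge: "asm_edge n A A'" unfolding asm_edge_def
    using A A'asm bA' ex by simp
  show ?thesis using edge bA' le' by blast
qed

lemma part1_aux:
  "\<forall>A. is_asm n A \<and> is_asm n B \<and> asm_le n A B \<and> nat (beta n B - beta n A) = N \<longrightarrow>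
     (\<exists>xs. xs \<noteq> [] \<and> hd xs = A \<and> last xs = B \<and>
        (\<forall>t. Suc t < length xs \<longrightarrow> asm_edge n (xs ! t) (xs ! Suc t) \<and>
              beta n (xs ! Suc t) - beta n (xs ! t) = 1))"
proof (induction N)
  case 0
  show ?case
  proof (intro allI impI)
    fix A assume h: "is_asm n A \<and> is_asm n B \<and> asm_le n A B \<and> nat (beta n B - beta n A) = 0"
    have nn: "0 \<le> beta n B - beta n A" unfolding beta_diff using h
      by (intro sum_nonneg) (auto simp: asm_le_def)
    then have "beta n A = beta n B" using h by simp
    then have z: "(\<Sum>i=1..n. \<Sum>j=1..n. csum A i j - csum B i j) = 0" using beta_diff[of n B A] by simp
    have nn2: "\<forall>i\<in>{1..n}. \<forall>j\<in>{1..n}. 0 \<le> csum A i j - csum B i j" using h by (auto simp: asm_le_def)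
    have "\<forall>i\<in>{1..n}. (\<Sum>j=1..n. csum A i j - csum B i j) = 0"
      using z nn2 by (subst (asm) sum_nonneg_eq_0_iff) (auto intro: sum_nonneg)
    then have "\<forall>i\<in>{1..n}. \<forall>j\<in>{1..n}. csum A i j - csum B i j = 0"
    proof (intro ballI)
      fix i j assume row0: "\<forall>i\<in>{1..n}. (\<Sum>j=1..n. csum A i j - csum B i j) = 0"
        and i: "i\<in>{1..n}" and j: "j\<in>{1..n}"
      have s0: "(\<Sum>j=1..n. csum A i j - csum B i j) = 0" using row0 i by blast
      have "\<forall>j\<in>{1..n}. csum A i j - csum B i j = 0"
        using s0 nn2 i sum_nonneg_eq_0_iff[of "{1..n}" "\<lambda>j. csum A i j - csum B i j"] by auto
      then show "csum A i j - csum B i j = 0" using j by blast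
    qed
    then have "\<forall>x\<le>n. \<forall>y\<le>n. csum A x y = csum B x y"
      by (metis atLeastAtMost_iff csum_0l csum_0r eq_iff_diff_eq_0 le_numeral_extra(4) less_one not_le)
    then have "A = B" using asm_eq h by blast
    then show "\<exists>xs. xs \<noteq> [] \<and> hd xs = A \<and> last xs = B \<and>
        (\<forall>t. Suc t < length xs \<longrightarrow> asm_edge n (xs ! t) (xs ! Suc t) \<and>
              beta n (xs ! Suc t) - beta n (xs ! t) = 1)"
      by (intro exI[of _ "[A]"]) auto
  qed
next
  case (Suc N)
  show ?case
  proof (intro allI impI)
    fix A assume h: "is_asm n A \<and> is_asm n B \<and> asm_le n A B \<and> nat (beta n B - beta n A) = Suc N"
    then have "beta n A \<noteq> beta n B" by auto
    then obtain A' where A': "asm_edge n A A'" "beta n A' = beta n A + 1" "asm_le n A' B"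
      using one_step h by blast
    have "is_asm n A'" using A' by (simp add: asm_edge_def)
    moreover have "nat (beta n B - beta n A') = N" using h A'(2) by linarith
    ultimately obtain xs where xs: "xs \<noteq> []" "hd xs = A'" "last xs = B"
      "\<forall>t. Suc t < length xs \<longrightarrow> asm_edge n (xs ! t) (xs ! Suc t) \<and> beta n (xs ! Suc t) - beta n (xs ! t) = 1"
      using Suc.IH h A' by blast
    have x0: "xs ! 0 = A'" using xs by (simp add: hd_conv_nth)
    have all: "\<forall>t. Suc t < length (A # xs) \<longrightarrow> asm_edge n ((A # xs) ! t) ((A # xs) ! Suc t) \<and>
           beta n ((A # xs) ! Suc t) - beta n ((A # xs) ! t) = 1"
    proof (intro allI impI)
      fix t assume t: "Suc t < length (A # xs)"
      show "asm_edge n ((A # xs) ! t) ((A # xs) ! Suc t) \<and>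
           beta n ((A # xs) ! Suc t) - beta n ((A # xs) ! t) = 1"
      proof (cases t)
        case 0 then show ?thesis using A' x0 by simp
      next
        case (Suc t') then show ?thesis using xs(4) t by simp
      qed
    qed
    show "\<exists>xs. xs \<noteq> [] \<and> hd xs = A \<and> last xs = B \<and>
        (\<forall>t. Suc t < length xs \<longrightarrow> asm_edge n (xs ! t) (xs ! Suc t) \<and>
              beta n (xs ! Suc t) - beta n (xs ! t) = 1)"
      using all xs by (intro exI[of _ "A # xs"]) auto
  qed
qed

lemma part1: "is_asm n A \<Longrightarrow> is_asm n B \<Longrightarrow> asm_le n A B \<Longrightarrow>
     (\<exists>xs. xs \<noteq> [] \<and> hd xs = A \<and> last xs = B \<and>
        (\<forall>t. Suc t < length xs \<longrightarrow> asm_edge n (xs ! t) (xs ! Suc t) \<and>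
              beta n (xs ! Suc t) - beta n (xs ! t) = 1))"
  using part1_aux by blast


definition bg :: "nat \<Rightarrow> nat \<Rightarrow> nat \<Rightarrow> nat \<Rightarrow> nat" where
  "bg p q c x = (if x \<le> c then x else if x \<le> p then x + q - c else if x \<le> p + q - c then x + c - p else x)"

definition Gf :: "nat \<Rightarrow> nat \<Rightarrow> nat \<Rightarrow> nat \<Rightarrow> nat \<Rightarrow> int" where
  "Gf p q c x y = min (int x) (min (int y) (int c + int (x - p) + int (y - q)))"

lemma bg_inv: "c < p \<Longrightarrow> c < q \<Longrightarrow> bg q p c (bg p q c x) = x"
  unfolding bg_def by auto

lemma Gf_step: assumes "c < p" "c < q"
  shows "Gf p q c (Suc x) y = Gf p q c x y + (if bg p q c (Suc x) \<le> y then 1 else 0)"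
  using assms unfolding Gf_def bg_def by (auto simp: min_def)

lemma bg_desc: assumes "c < p" "c < q" "p + q \<le> n + c"
  shows "{j\<in>{1..n-1}. bg p q c j > bg p q c (j+1)} = {p}"
  using assms unfolding bg_def by (auto split: if_splits)


lemma bg_permutes: assumes "c < p" "c < q" "p + q \<le> n + c"
  shows "bg p q c permutes {1..n}"
  unfolding permutes_def
proof (intro conjI allI impI)
  fix x assume "x \<notin> {1..n}"
  then show "bg p q c x = x" using assms by (auto simp: bg_def)
next
  fix y show "\<exists>!x. bg p q c x = y"
  proof (rule ex1I[of _ "bg q p c y"])
    show "bg p q c (bg q p c y) = y" using bg_inv[of c q p y] assms by simp
    fix x assume "bg p q c x = y"
    then show "x = bg q p c y" using bg_inv[of c p q x] assms by simp
  qed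
qed

lemma inv_bg: assumes "c < p" "c < q" shows "inv (bg p q c) = bg q p c"
  by (rule inv_equality) (use bg_inv[of c p q] bg_inv[of c q p] assms in auto)

lemma bg_bigrass: assumes "c < p" "c < q" "p + q \<le> n + c"
  shows "bigrassmannian n (bg p q c)"
  unfolding bigrassmannian_def inv_bg[OF assms(1,2)]
  using bg_desc[OF assms] bg_desc[of c q p n] assms by (simp add: add.commute)

lemma perm_in: assumes "w permutes {1..n}" "x \<in> {1..n}" shows "w x \<in> {1..n}"
  using permutes_in_image[OF assms(1)] assms(2) by simp

lemma perm_asm: assumes w: "w permutes {1..n}" shows "is_asm n (perm_matrix n w)"
proof -
  have wi: "inv w permutes {1..n}" using permutes_inv[OF w] .
  have eq: "w i = j \<longleftrightarrow> i = inv w j" for i j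
  proof
    assume "w i = j" then show "i = inv w j" using permutes_inverses(2)[OF w, of i] by simp
  next
    assume "i = inv w j" then show "w i = j" using permutes_inverses(1)[OF w, of j] by simp
  qed
  have row: "(\<Sum>q=1..j. perm_matrix n w i q) = (if w i \<in> {1..j} then 1 else 0)" if "i \<in> {1..n}" "j \<le> n" for i j
  proof -
    have "(\<Sum>q=1..j. perm_matrix n w i q) = (\<Sum>q\<in>{1..j}. if w i = q then 1 else 0)"
    proof (rule sum.cong)
      fix q assume "q \<in> {1..j}"
      then show "perm_matrix n w i q = (if w i = q then 1 else 0)" using that unfolding perm_matrix_def by simp
    qed simp
    then show ?thesis by (simp add: sum.delta)
  qed
  have col: "(\<Sum>p=1..i. perm_matrix n w p j) = (if inv w j \<in> {1..i} then 1 else 0)" if "j \<in> {1..n}" "i \<le> n" for i j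
  proof -
    have "(\<Sum>p=1..i. perm_matrix n w p j) = (\<Sum>p\<in>{1..i}. if inv w j = p then 1 else 0)"
    proof (rule sum.cong)
      fix p assume "p \<in> {1..i}"
      moreover have "(w p = j) = (inv w j = p)" using eq[of p j] by auto
      ultimately show "perm_matrix n w p j = (if inv w j = p then 1 else 0)" using that unfolding perm_matrix_def by simp
    qed simp
    then show ?thesis by (simp add: sum.delta)
  qed
  show ?thesis unfolding is_asm_def
  proof (intro conjI ballI allI impI)
    fix i j assume "\<not> (1 \<le> i \<and> i \<le> n \<and> 1 \<le> j \<and> j \<le> n)"
    then show "perm_matrix n w i j = 0" by (auto simp: perm_matrix_def)
  next
    fix i j assume i: "i \<in> {1..n}" and j: "j \<in> {1..n}"
    show "perm_matrix n w i j \<in> {- 1, 0, 1}" by (simp add: perm_matrix_def)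
    show "(\<Sum>q = 1..j. perm_matrix n w i q) \<in> {0, 1}" using row[of i j] i j by simp
    show "(\<Sum>p = 1..i. perm_matrix n w p j) \<in> {0, 1}" using col[of j i] i j by simp
  next
    fix i assume i: "i \<in> {1..n}"
    show "(\<Sum>q = 1..n. perm_matrix n w i q) = 1" using row[of i n] i perm_in[OF w i] by simp
    show "(\<Sum>p = 1..n. perm_matrix n w p i) = 1" using col[of i n] i perm_in[OF wi i] by simp
  qed
qed

lemma csum_perm_step: assumes w: "w permutes {1..n}" and x: "Suc x \<le> n"
  shows "csum (perm_matrix n w) (Suc x) y = csum (perm_matrix n w) x y + (if w (Suc x) \<le> y then 1 else 0)"
proof -
  have r: "w (Suc x) \<in> {1..n}" using perm_in[OF w] x by simp
  have "(\<Sum>q=1..y. perm_matrix n w (Suc x) q) = (\<Sum>q\<in>{1..y}. if w (Suc x) = q then 1 else 0)"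
  proof (rule sum.cong)
    fix q assume "q \<in> {1..y}"
    then show "perm_matrix n w (Suc x) q = (if w (Suc x) = q then 1 else 0)"
      using x r unfolding perm_matrix_def by auto
  qed simp
  also have "\<dots> = (if w (Suc x) \<le> y then 1 else 0)" using r by (simp add: sum.delta)
  finally show ?thesis by (simp add: csum_Suc_row)
qed

lemma csum_bg: assumes "c < p" "c < q" "p + q \<le> n + c" "x \<le> n"
  shows "csum (perm_matrix n (bg p q c)) x y = Gf p q c x y"
  using assms(4)
proof (induction x)
  case 0 then show ?case by (simp add: Gf_def)
next
  case (Suc x)
  then show ?case using csum_perm_step[OF bg_permutes[OF assms(1-3)] Suc.prems, of y]
      Gf_step[OF assms(1,2), of x y] by simp
qed

lemma bg_is_bigrass: assumes "c < p" "c < q" "p + q \<le> n + c"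
  shows "is_bigrass_perm_matrix n (perm_matrix n (bg p q c))"
  unfolding is_bigrass_perm_matrix_def using bg_permutes[OF assms] bg_bigrass[OF assms] by blast


definition smono :: "(nat \<Rightarrow> nat) \<Rightarrow> nat \<Rightarrow> nat \<Rightarrow> bool" where
  "smono f s e \<longleftrightarrow> (\<forall>x y. s \<le> x \<longrightarrow> x < y \<longrightarrow> y \<le> e \<longrightarrow> f x < f y)"

lemma smono_I: assumes "\<forall>x. s \<le> x \<and> Suc x \<le> e \<longrightarrow> f x < f (Suc x)" shows "smono f s e"
  unfolding smono_def
proof (intro allI impI)
  fix x y assume h: "s \<le> x" "x < y" "y \<le> e"
  from h(2,3) show "f x < f y"
  proof (induction y)
    case 0 then show ?case by simp
  next
    case (Suc y)
    show ?case
    proof (cases "x = y")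
      case True then show ?thesis using assms h Suc.prems by auto
    next
      case False
      then have "f x < f y" using Suc by simp
      moreover have "f y < f (Suc y)" using assms h Suc.prems False by auto
      ultimately show ?thesis by simp
    qed
  qed
qed

lemma smono_ge: assumes "smono f s e" "s \<le> s'" "s' \<le> x" "x \<le> e" shows "f s' + (x - s') \<le> f x"
  using assms(3,4)
proof (induction x rule: dec_induct)
  case base then show ?case by simp
next
  case (step m)
  then have "f m < f (Suc m)" using assms(1,2) unfolding smono_def by auto
  then show ?case using step by (simp add: Suc_diff_le)
qed

lemma smono_lt: "smono f s e \<Longrightarrow> s \<le> x \<Longrightarrow> x < y \<Longrightarrow> y \<le> e \<Longrightarrow> f x < f y"
  unfolding smono_def by blast

lemma single_desc:
  assumes "card {j\<in>{1..n-1}. f j > f (j+1)} = 1" and inj: "inj f"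
  obtains j where "1 \<le> j" "j \<le> n - 1" "f j > f (j+1)"
    "smono f 1 j" "smono f (Suc j) n"
proof -
  obtain j where J: "{j\<in>{1..n-1}. f j > f (j+1)} = {j}" using assms(1) card_1_singletonE by blast
  then have j: "1 \<le> j" "j \<le> n - 1" "f j > f (j+1)" by auto
  have st: "f x < f (Suc x)" if "1 \<le> x" "x \<le> n - 1" "x \<noteq> j" for x
  proof -
    have "\<not> f x > f (x+1)" using J that by auto
    moreover have "f x \<noteq> f (Suc x)" using inj by (auto dest: injD)
    ultimately show ?thesis by simp
  qed
  have "smono f 1 j" by (rule smono_I) (use st j in auto)
  moreover have "smono f (Suc j) n" by (rule smono_I) (use st j in auto)
  ultimately show ?thesis using that j by blast
qed

lemma classify:
  assumes w: "w permutes {1..n}" and bgr: "bigrassmannian n w"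
  shows "\<exists>p q c. c < p \<and> c < q \<and> p + q \<le> n + c \<and> (\<forall>x\<in>{1..n}. w x = bg p q c x)"
proof -
  define wi where "wi = inv w"
  have wiP: "wi permutes {1..n}" unfolding wi_def using permutes_inv[OF w] .
  have inv1: "\<And>u. w (wi u) = u" and inv2: "\<And>x. wi (w x) = x"
    unfolding wi_def using permutes_inverses[OF w] by auto
  have injw: "inj w" using permutes_inj[OF w] .
  have injwi: "inj wi" using permutes_inj[OF wiP] .
  have rw: "\<And>x. x \<in> {1..n} \<Longrightarrow> w x \<in> {1..n}" using perm_in[OF w] by blast
  have rwi: "\<And>x. x \<in> {1..n} \<Longrightarrow> wi x \<in> {1..n}" using perm_in[OF wiP] by blast
  obtain j where j: "1 \<le> j" "j \<le> n - 1" "w j > w (j+1)" and m1: "smono w 1 j" and m2: "smono w (Suc j) n"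
    using single_desc[of n w] bgr injw unfolding bigrassmannian_def by blast
  obtain v where v: "1 \<le> v" "v \<le> n - 1" "wi v > wi (v+1)" and mi1: "smono wi 1 v" and mi2: "smono wi (Suc v) n"
    using single_desc[of n wi] bgr injwi unfolding bigrassmannian_def wi_def by blast
  have ge1: "x \<le> w x" if "1 \<le> x" "x \<le> j" for x
  proof -
    have "1 \<le> n" using j by simp
    then have "1 \<le> w 1" using rw[of 1] by simp
    then show ?thesis using smono_ge[OF m1 order_refl that] that by simp
  qed
  have le2: "w x \<le> x" if "Suc j \<le> x" "x \<le> n" for x
    using smono_ge[OF m2 that(1) that(2) order_refl] rw[of n] that by auto
  have gei1: "u \<le> wi u" if "1 \<le> u" "u \<le> v" for u
  proof -
    have "1 \<le> n" using v by simp
    then have "1 \<le> wi 1" using rwi[of 1] by simp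
    then show ?thesis using smono_ge[OF mi1 order_refl that] that by simp
  qed
  have lei2: "wi u \<le> u" if "Suc v \<le> u" "u \<le> n" for u
    using smono_ge[OF mi2 that(1) that(2) order_refl] rwi[of n] that by auto
  have Fa: "w x = x" if "1 \<le> x" "x \<le> j" "w x \<le> v" for x
  proof -
    have "1 \<le> w x" using rw[of x] that j by auto
    then have "w x \<le> wi (w x)" using gei1 that by blast
    then show ?thesis using ge1[OF that(1,2)] inv2 by (simp add: antisym)
  qed
  have Fb: "w x = x" if "Suc j \<le> x" "x \<le> n" "v < w x" for x
  proof -
    have "w x \<le> n" using rw[of x] that j by auto
    then have "wi (w x) \<le> w x" using lei2 that by simp
    then show ?thesis using le2[OF that(1,2)] inv2 by (simp add: antisym)
  qed
  have jn: "Suc j \<le> n" using j by simp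
  define a where "a = w (Suc j) - 1"
  have wj1: "w (Suc j) \<ge> 1" using rw[of "Suc j"] jn by auto
  have a1: "w (Suc j) = a + 1" using wj1 unfolding a_def by simp
  have wia: "wi (a+1) = Suc j" using inv2[of "Suc j"] a1 by simp
  have av: "a + 1 \<le> v"
  proof (rule ccontr)
    assume "\<not> ?thesis"
    then have gv: "v < w (Suc j)" using a1 by simp
    then have fj: "w (Suc j) = Suc j" using Fb jn by blast
    define u where "u = w j"
    have u: "Suc j < u" "u \<le> n" using j fj rw[of j] unfolding u_def by auto
    then have "w (Suc j) < w u" using smono_lt[OF m2, of "Suc j" u] by simp
    then have "w u = u" using Fb[of u] u gv by simp
    then have "w u = w j" unfolding u_def by simp
    then have "u = j" using injw by (auto dest: injD)
    then show False using u by simp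
  qed
  have C1: "w x = x" if "1 \<le> x" "x \<le> a" for x
  proof -
    have "wi x < wi (a+1)" using smono_lt[OF mi1, of x "a+1"] that av by simp
    then have "wi x \<le> j" using wia by simp
    moreover have "1 \<le> wi x" using rwi[of x] that av v by auto
    moreover have "w (wi x) \<le> v" using inv1 that av by simp
    ultimately have "w (wi x) = wi x" using Fa by blast
    then have "x = wi x" using inv1 by simp
    then show ?thesis using inv1[of x] by simp
  qed
  have aj: "a < j"
  proof (rule ccontr)
    assume "\<not> ?thesis"
    then have "w j = j" using C1 j by simp
    then show False using j a1 \<open>\<not> a < j\<close> by simp
  qed
  have wa1: "v < w (a+1)"
  proof (rule ccontr)
    assume "\<not> ?thesis"
    then have "w (a+1) = a+1" using Fa[of "a+1"] aj by simp
    then have "w (a+1) = w (Suc j)" using a1 by simp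
    then have "a + 1 = Suc j" using injw by (auto dest: injD)
    then show False using aj by simp
  qed
  have wiv1: "a + 1 \<le> wi (v+1)"
  proof (rule ccontr)
    assume "\<not> ?thesis"
    moreover have "1 \<le> wi (v+1)" using rwi[of "v+1"] v by auto
    ultimately have "w (wi (v+1)) = wi (v+1)" using C1 by simp
    then have "v + 1 = wi (v+1)" using inv1 by simp
    then show False using \<open>\<not> a + 1 \<le> wi (v+1)\<close> av by simp
  qed
  have wjge: "w (a+1) \<le> w j"
  proof (cases "a + 1 = j")
    case False then show ?thesis using smono_lt[OF m1, of "a+1" j] aj by simp
  qed simp
  have wjn: "w j \<le> n" using rw[of j] j by auto
  have wj: "w j \<le> v + j - a"
  proof -
    have "wi (Suc v) + (w j - Suc v) \<le> wi (w j)"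
      using smono_ge[OF mi2 order_refl, of "w j"] wa1 wjge wjn by simp
    then show ?thesis using inv2[of j] wiv1 aj by simp
  qed
  have C2: "w x = x + v - a" if "a + 1 \<le> x" "x \<le> j" for x
  proof -
    have "w (a+1) + (x - (a+1)) \<le> w x" using smono_ge[OF m1, of "a+1" x] that by simp
    moreover have "w x + (j - x) \<le> w j" using smono_ge[OF m1, of x j] that by simp
    ultimately show ?thesis using wa1 wj that aj by simp
  qed
  define e where "e = j + v - a"
  have wiv: "e \<le> wi v"
    using smono_ge[OF mi1, of "a+1" v] av wia unfolding e_def by simp
  have "v \<le> n" using v by simp
  then have "wi v \<le> n" using rwi[of v] v by simp
  then have en: "e \<le> n" using wiv by simp
  have je: "Suc j \<le> e" using av unfolding e_def by simp
  have C3: "w x = x + a - j" if "Suc j \<le> x" "x \<le> e" for x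
  proof -
    have "w (Suc j) + (x - Suc j) \<le> w x" using smono_ge[OF m2, of "Suc j" x] that en by simp
    moreover have "w x + (wi v - x) \<le> w (wi v)" using smono_ge[OF m2, of x "wi v"] that wiv rwi[of v] v by simp
    ultimately show ?thesis using a1 inv1[of v] wiv that aj unfolding e_def by simp
  qed
  have C4: "w x = x" if "e < x" "x \<le> n" for x
  proof -
    have "w e + (x - e) \<le> w x" using smono_ge[OF m2, of e x] that je by simp
    moreover have "w e = v" using C3[of e] je aj av unfolding e_def by simp
    ultimately have "v < w x" using that by simp
    then show ?thesis using Fb[of x] that je by simp
  qed
  have "\<forall>x\<in>{1..n}. w x = bg j v a x"
  proof
    fix x assume x: "x \<in> {1..n}"
    show "w x = bg j v a x"
      unfolding bg_def using C1[of x] C2[of x] C3[of x] C4[of x] x unfolding e_def by auto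
  qed
  then show ?thesis using aj av en unfolding e_def
    by (intro exI[of _ j] exI[of _ v] exI[of _ a]) auto
qed


lemma pm_eq: assumes "\<forall>x\<in>{1..n}. w x = w' x" shows "perm_matrix n w = perm_matrix n w'"
  using assms by (intro ext) (auto simp: perm_matrix_def)

lemma pm_inj: assumes w: "w permutes {1..n}" and w': "w' permutes {1..n}"
  and eq: "perm_matrix n w = perm_matrix n w'" and x: "x \<in> {1..n}"
  shows "w x = w' x"
proof -
  have r: "w x \<in> {1..n}" using perm_in[OF w x] .
  have "perm_matrix n w x (w x) = 1" using x r by (simp add: perm_matrix_def)
  then have "perm_matrix n w' x (w x) = 1" using eq by simp
  then show ?thesis by (simp add: perm_matrix_def split: if_splits)
qed

lemma bg_at: assumes "c < p" "c < q"
  shows "bg p q c (Suc p) = Suc c" "bg p q c p = p + q - c"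
  using assms by (auto simp: bg_def)

lemma part2: assumes A: "is_asm n A"
  shows "beta n A = int (card {B. is_asm n B \<and> asm_le n B A \<and> is_bigrass_perm_matrix n B})"
proof -
  let ?CA = "csum A"
  have VA: "valid n ?CA" using asm_valid[OF A] .
  define T where "T = Sigma {1..n} (\<lambda>p. Sigma {1..n} (\<lambda>q. {c. c < p \<and> c < q \<and> p + q \<le> n + c \<and> ?CA p q \<le> int c}))"
  define f where "f = (\<lambda>(p,(q,c)). perm_matrix n (bg p q c))"
  have Tmem: "(p,(q,c)) \<in> T \<longleftrightarrow> p \<in> {1..n} \<and> q \<in> {1..n} \<and> c < p \<and> c < q \<and> p + q \<le> n + c \<and> ?CA p q \<le> int c" for p q c
    unfolding T_def by auto
  have X: "{B. is_asm n B \<and> asm_le n B A \<and> is_bigrass_perm_matrix n B} = f ` T"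
  proof (intro equalityI subsetI)
    fix B assume "B \<in> {B. is_asm n B \<and> asm_le n B A \<and> is_bigrass_perm_matrix n B}"
    then have B: "is_asm n B" "asm_le n B A" "is_bigrass_perm_matrix n B" by auto
    then obtain w where w: "w permutes {1..n}" "bigrassmannian n w" "B = perm_matrix n w"
      unfolding is_bigrass_perm_matrix_def by blast
    obtain p q c where pqc: "c < p" "c < q" "p + q \<le> n + c" "\<forall>x\<in>{1..n}. w x = bg p q c x"
      using classify[OF w(1,2)] by blast
    have Bq: "B = perm_matrix n (bg p q c)" using w(3) pm_eq[OF pqc(4)] by simp
    have pn: "p \<le> n" "q \<le> n" using pqc by auto
    have "csum A p q \<le> csum B p q" using B(2) pn unfolding asm_le_def by auto
    also have "csum B p q = Gf p q c p q" unfolding Bq using csum_bg[OF pqc(1-3) pn(1)] .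
    also have "\<dots> = int c" using pqc by (simp add: Gf_def)
    finally have "(p,(q,c)) \<in> T" unfolding Tmem using pqc pn by auto
    then show "B \<in> f ` T" unfolding Bq f_def by force
  next
    fix B assume "B \<in> f ` T"
    then obtain p q c where t: "(p,(q,c)) \<in> T" and Bq: "B = perm_matrix n (bg p q c)"
      unfolding f_def by auto
    have pqc: "c < p" "c < q" "p + q \<le> n + c" "p \<le> n" "q \<le> n" "?CA p q \<le> int c" using t unfolding Tmem by auto
    have "is_asm n B" unfolding Bq using perm_asm[OF bg_permutes[OF pqc(1-3)]] .
    moreover have "is_bigrass_perm_matrix n B" unfolding Bq using bg_is_bigrass[OF pqc(1-3)] .
    moreover have "asm_le n B A" unfolding asm_le_def
    proof (intro ballI)
      fix x y assume xy: "x \<in> {0..n}" "y \<in> {0..n}"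
      have "csum B x y = Gf p q c x y" unfolding Bq using csum_bg[OF pqc(1-3)] xy by simp
      moreover have "?CA x y \<le> int x" "?CA x y \<le> int y" using valid_bounds[OF VA] xy by auto
      moreover have "?CA x y \<le> ?CA p q + int (x - p) + int (y - q)" using valid_lip[OF VA] xy pqc by auto
      ultimately show "csum A x y \<le> csum B x y" using pqc(6) by (simp add: Gf_def)
    qed
    ultimately show "B \<in> {B. is_asm n B \<and> asm_le n B A \<and> is_bigrass_perm_matrix n B}" by simp
  qed
  have inj: "inj_on f T"
  proof (rule inj_onI)
    fix t1 t2 assume t1: "t1 \<in> T" and t2: "t2 \<in> T" and e: "f t1 = f t2"
    obtain p1 q1 c1 where t1e: "t1 = (p1,(q1,c1))" by (cases t1) auto
    obtain p2 q2 c2 where t2e: "t2 = (p2,(q2,c2))" by (cases t2) auto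
    have h1: "c1 < p1" "c1 < q1" "p1 + q1 \<le> n + c1" using t1 unfolding t1e Tmem by auto
    have h2: "c2 < p2" "c2 < q2" "p2 + q2 \<le> n + c2" using t2 unfolding t2e Tmem by auto
    have pe: "perm_matrix n (bg p1 q1 c1) = perm_matrix n (bg p2 q2 c2)" using e unfolding t1e t2e f_def by simp
    have weq: "\<And>x. x \<in> {1..n} \<Longrightarrow> bg p1 q1 c1 x = bg p2 q2 c2 x"
      using pm_inj[OF bg_permutes[OF h1] bg_permutes[OF h2] pe] by blast
    have "{j\<in>{1..n-1}. bg p1 q1 c1 j > bg p1 q1 c1 (j+1)} = {j\<in>{1..n-1}. bg p2 q2 c2 j > bg p2 q2 c2 (j+1)}"
      using weq by force
    then have pp: "p1 = p2" using bg_desc[OF h1] bg_desc[OF h2] by simp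
    have "Suc p1 \<in> {1..n}" using h1 by auto
    then have "Suc c1 = Suc c2" using weq[of "Suc p1"] bg_at[OF h1(1,2)] bg_at[OF h2(1,2)] pp by simp
    then have cc: "c1 = c2" by simp
    have "p1 \<in> {1..n}" using h1 by auto
    then have "p1 + q1 - c1 = p2 + q2 - c2" using weq[of p1] bg_at[OF h1(1,2)] bg_at[OF h2(1,2)] pp by simp
    then have "q1 = q2" using pp cc h1 h2 by simp
    then show "t1 = t2" using pp cc t1e t2e by simp
  qed
  have cardc: "card {c. c < p \<and> c < q \<and> p + q \<le> n + c \<and> ?CA p q \<le> int c} = nat (int (min p q) - ?CA p q)"
    if "p \<in> {1..n}" "q \<in> {1..n}" for p q
  proof -
    have b: "0 \<le> ?CA p q" "?CA p q \<le> int p" "?CA p q \<le> int q" "int p + int q - int n \<le> ?CA p q"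
      using valid_bounds[OF VA] that by auto
    have "{c. c < p \<and> c < q \<and> p + q \<le> n + c \<and> ?CA p q \<le> int c} = {nat (?CA p q)..<min p q}"
      using b by auto
    then show ?thesis using b by simp
  qed
  have "card T = (\<Sum>p\<in>{1..n}. \<Sum>q\<in>{1..n}. card {c. c < p \<and> c < q \<and> p + q \<le> n + c \<and> ?CA p q \<le> int c})"
    unfolding T_def by (simp add: card_SigmaI)
  then have "int (card T) = (\<Sum>p\<in>{1..n}. \<Sum>q\<in>{1..n}. int (nat (int (min p q) - ?CA p q)))"
    using cardc by simp
  also have "\<dots> = (\<Sum>p\<in>{1..n}. \<Sum>q\<in>{1..n}. int (min p q) - ?CA p q)"
  proof (intro sum.cong refl)
    fix p q assume "p \<in> {1..n}" "q \<in> {1..n}"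
    then have "?CA p q \<le> int (min p q)" using valid_bounds[OF VA, of p q] by auto
    then show "int (nat (int (min p q) - ?CA p q)) = int (min p q) - ?CA p q" by simp
  qed
  also have "\<dots> = beta n A" unfolding beta_def by (simp add: sum_subtractf)
  finally show ?thesis using X card_image[OF inj] by simp
qed


theorem mainTheorem9:
  fixes n :: nat
  shows "(\<forall>A B. is_asm n A \<and> is_asm n B \<and> asm_le n A B \<longrightarrow>
            (\<exists>xs. xs \<noteq> [] \<and> hd xs = A \<and> last xs = B \<and>
               (\<forall>t. Suc t < length xs \<longrightarrow>
                  asm_edge n (xs ! t) (xs ! Suc t) \<and>
                  beta n (xs ! Suc t) - beta n (xs ! t) = 1))) \<and>
         (\<forall>A. is_asm n A \<longrightarrow>
            beta n A = int (card {B. is_asm n B \<and> asm_le n B A \<and> is_bigrass_perm_matrix n B}))"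
  using part1 part2 by blast

end
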